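(* Let $a<b$ be real numbers and let $f:[a,b]\to\mathbb{R}$ be a convex Riemann integrable function. Then for all $t\in[0,1]$, \[ f(tb+(1-t)a)\le (1-t)\int_0^{1}f\big(t\alpha(b-a)+a\big)\,d\alpha+t\int_0^{1}f\big((1-t)\alpha(b-a)+tb+(1-t)a\big)\, d\alpha \le tf(b)+(1-t)f(a). \] *)

theory Defs
  imports "HOL-Analysis.Analysis"
begin

definition riemann_integrable_on :: "(real \<Rightarrow> real) \<Rightarrow> real set \<Rightarrow> bool" where
  "riemann_integrable_on f S \<longleftrightarrow>
     (\<exists>I. \<forall>e>0. \<exists>d>0. \<forall>D. D tagged_division_of S \<and> (\<lambda>x. ball x d) fine D \<longrightarrow>
        \<bar>(\<Sum>(x,K)\<in>D. measure lborel K * f x) - I\<bar> < e)"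

end

theory Submission
  imports Defs
begin

lemma riem_int:
  assumes "riemann_integrable_on f {a..b}"
  shows "f integrable_on {a..b}"
proof -
  from assms obtain I where I: "\<forall>e>0. \<exists>d>0. \<forall>D. D tagged_division_of {a..b} \<and> (\<lambda>x. ball x d) fine D \<longrightarrow>
        \<bar>(\<Sum>(x,K)\<in>D. measure lborel K * f x) - I\<bar> < e"
    unfolding riemann_integrable_on_def by blast
  have "(f has_integral I) {a..b}"
    unfolding has_integral_real
  proof (intro allI impI)
    fix e :: real assume "e > 0"
    then obtain d where d: "d > 0" "\<forall>D. D tagged_division_of {a..b} \<and> (\<lambda>x. ball x d) fine D \<longrightarrow>
        \<bar>(\<Sum>(x,K)\<in>D. measure lborel K * f x) - I\<bar> < e" using I by blast
    show "\<exists>\<gamma>. gauge \<gamma> \<and> (\<forall>\<D>. \<D> tagged_division_of {a..b} \<and> \<gamma> fine \<D> \<longrightarrow>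
        norm (sum (\<lambda>(x,k). measure lborel k *\<^sub>R f x) \<D> - I) < e)"
      using d by (intro exI[of _ "\<lambda>x. ball x d"]) (auto simp: gauge_ball)
  qed
  then show ?thesis by blast
qed

lemma aff_int:
  fixes f :: "real \<Rightarrow> real"
  assumes "f integrable_on {a..b}" "a \<le> p" "p \<le> q" "q \<le> b"
  shows "(\<lambda>x. f ((q - p) * x + p)) integrable_on {0..1}"
proof (cases "p = q")
  case True then show ?thesis using integrable_const_ivl by simp
next
  case False
  then have m: "q - p > 0" using assms by simp
  have "f integrable_on {p..q}"
    using assms by (intro integrable_on_subinterval[OF assms(1)]) auto
  then obtain I where "(f has_integral I) (cbox p q)" by (auto simp: integrable_on_def)
  from has_integral_affinity'[OF this m, of p]
  have "((\<lambda>x. f ((q - p) * x + p)) has_integral (I /\<^sub>R (q-p) ^ DIM(real))) (cbox 0 1)"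
    using m by simp
  then show ?thesis by (auto simp: integrable_on_def)
qed

lemma refl_int:
  fixes h :: "real \<Rightarrow> real"
  assumes "h integrable_on {0..1}"
  shows "(\<lambda>x. h (1 - x)) integrable_on {0..1} \<and> integral {0..1} (\<lambda>x. h (1 - x)) = integral {0..1} h"
proof -
  have "(h has_integral integral {0..1} h) (cbox 0 1)" using assms by (simp add: integrable_integral)
  from has_integral_affinity[OF this, of "-1" 1]
  have "((\<lambda>x. h (1 - x)) has_integral integral {0..1} h) ((\<lambda>x. - x + 1) ` cbox 0 1)"
    by simp
  moreover have "(\<lambda>x::real. - x + 1) ` cbox 0 1 = {0..1}"
  proof
    show "{0..1} \<subseteq> (\<lambda>x::real. - x + 1) ` cbox 0 1"
    proof
      fix y :: real assume "y \<in> {0..1}"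
      then show "y \<in> (\<lambda>x::real. - x + 1) ` cbox 0 1" by (intro image_eqI[of _ _ "1 - y"]) auto
    qed
  qed auto
  ultimately show ?thesis by (auto simp: integrable_on_def)
qed

theorem theorem2p1:
  fixes f :: "real \<Rightarrow> real" and a b t :: real
  assumes "a < b"
    and "convex_on {a..b} f"
    and "riemann_integrable_on f {a..b}"
    and "t \<in> {0..1}"
  shows "f (t * b + (1 - t) * a)
           \<le> (1 - t) * integral {0..1} (\<lambda>\<alpha>. f (t * \<alpha> * (b - a) + a))
             + t * integral {0..1} (\<lambda>\<alpha>. f ((1 - t) * \<alpha> * (b - a) + t * b + (1 - t) * a))
       \<and> (1 - t) * integral {0..1} (\<lambda>\<alpha>. f (t * \<alpha> * (b - a) + a))
             + t * integral {0..1} (\<lambda>\<alpha>. f ((1 - t) * \<alpha> * (b - a) + t * b + (1 - t) * a))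
           \<le> t * f b + (1 - t) * f a"
proof -
  define c where "c = t * b + (1 - t) * a"
  define g1 where "g1 = (\<lambda>\<alpha>. f (t * \<alpha> * (b - a) + a))"
  define g2 where "g2 = (\<lambda>\<alpha>. f ((1 - t) * \<alpha> * (b - a) + t * b + (1 - t) * a))"
  have t0: "0 \<le> t" and t1: "t \<le> 1" using assms(4) by auto
  have fi: "f integrable_on {a..b}" using riem_int assms(3) by blast
  have h1: "0 \<le> t * (b - a)" and h2: "0 \<le> (1 - t) * (b - a)" using assms(1) t0 t1 by auto
  have ca: "a \<le> c" unfolding c_def using h1 by (simp add: algebra_simps)
  have cb: "c \<le> b" unfolding c_def using h2 by (simp add: algebra_simps)
  have g1e: "g1 = (\<lambda>x. f ((c - a) * x + a))" unfolding g1_def c_def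
    by (rule ext) (simp add: algebra_simps)
  have g2e: "g2 = (\<lambda>x. f ((b - c) * x + c))" unfolding g2_def c_def
    by (rule ext) (simp add: algebra_simps)
  have i1: "g1 integrable_on {0..1}" unfolding g1e using aff_int[OF fi] ca cb by simp
  have i2: "g2 integrable_on {0..1}" unfolding g2e using aff_int[OF fi] ca cb by simp
  note r1 = refl_int[OF i1] and r2 = refl_int[OF i2]
  have cvx: "f ((1 - u) * x + u * y) \<le> (1 - u) * f x + u * f y"
    if "0 \<le> u" "u \<le> 1" "x \<in> {a..b}" "y \<in> {a..b}" for u x y
    using convex_onD[OF assms(2) that] by simp
  have mem: "(1 - u) * x + u * y \<in> {a..b}" if "0 \<le> u" "u \<le> 1" "x \<in> {a..b}" "y \<in> {a..b}" for u x y
  proof -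
    have "(1 - u) * a + u * a \<le> (1 - u) * x + u * y"
      using that by (intro add_mono mult_left_mono) auto
    moreover have "(1 - u) * x + u * y \<le> (1 - u) * b + u * b"
      using that by (intro add_mono mult_left_mono) auto
    ultimately show ?thesis by (simp add: algebra_simps)
  qed
  have abi: "a \<in> {a..b}" "b \<in> {a..b}" "c \<in> {a..b}" using ca cb assms(1) by auto
  have p1: "g1 x \<le> (1 - x) * f a + x * f c" if "x \<in> {0..1}" for x
  proof -
    have "g1 x = f ((1 - x) * a + x * c)" unfolding g1e by (simp add: algebra_simps)
    then show ?thesis using cvx[of x a c] that abi by auto
  qed
  have p2: "g2 x \<le> (1 - x) * f c + x * f b" if "x \<in> {0..1}" for x
  proof -
    have "g2 x = f ((1 - x) * c + x * b)" unfolding g2e by (simp add: algebra_simps)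
    then show ?thesis using cvx[of x c b] that abi by auto
  qed
  have low: "f c \<le> (1 - t) * g1 x + t * g2 (1 - x)" if "x \<in> {0..1}" for x
  proof -
    have e: "c = (1 - t) * ((1 - x) * a + x * c) + t * ((1 - (1 - x)) * c + (1 - x) * b)"
      unfolding c_def by (simp add: algebra_simps)
    have m1: "(1 - x) * a + x * c \<in> {a..b}" using mem[of x a c] that abi by auto
    have m2: "(1 - (1 - x)) * c + (1 - x) * b \<in> {a..b}" using mem[of "1 - x" c b] that abi by auto
    have "f c \<le> (1 - t) * f ((1 - x) * a + x * c) + t * f ((1 - (1 - x)) * c + (1 - x) * b)"
      using cvx[OF t0 t1 m1 m2] e by simp
    moreover have "g1 x = f ((1 - x) * a + x * c)" unfolding g1e by (simp add: algebra_simps)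
    moreover have "g2 (1 - x) = f ((1 - (1 - x)) * c + (1 - x) * b)" unfolding g2e by (simp add: algebra_simps)
    ultimately show ?thesis by simp
  qed
  have L: "f c \<le> (1 - t) * integral {0..1} g1 + t * integral {0..1} g2"
  proof -
    have "integral {0..1::real} (\<lambda>x. f c) \<le> integral {0..1} (\<lambda>x. (1 - t) * g1 x + t * g2 (1 - x))"
    proof (rule Henstock_Kurzweil_Integration.integral_le)
      show "(\<lambda>x. (1 - t) * g1 x + t * g2 (1 - x)) integrable_on {0..1}"
        using integrable_add[OF integrable_cmul[OF i1, of "1 - t"] integrable_cmul[OF conjunct1[OF r2], of t]] by simp
    qed (use low in auto)
    also have "\<dots> = (1 - t) * integral {0..1} g1 + t * integral {0..1} (\<lambda>x. g2 (1 - x))"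
    proof -
      have a1: "(\<lambda>x. (1 - t) * g1 x) integrable_on {0..1}" using integrable_cmul[OF i1, of "1 - t"] by simp
      have a2: "(\<lambda>x. t * g2 (1 - x)) integrable_on {0..1}" using integrable_cmul[OF conjunct1[OF r2], of t] by simp
      have "integral {0..1} (\<lambda>x. (1 - t) * g1 x + t * g2 (1 - x)) = integral {0..1} (\<lambda>x. (1 - t) * g1 x) + integral {0..1} (\<lambda>x. t * g2 (1 - x))"
        using integral_add[OF a1 a2] by simp
      then show ?thesis by (simp only: integral_mult[OF i1] integral_mult[OF conjunct1[OF r2]])
    qed
    finally show ?thesis using r2 by simp
  qed
  have U1: "2 * integral {0..1} g1 \<le> f a + f c"
  proof -
    have "integral {0..1} (\<lambda>x. g1 x + g1 (1 - x)) \<le> integral {0..1::real} (\<lambda>x. f a + f c)"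
    proof (rule Henstock_Kurzweil_Integration.integral_le)
      show "(\<lambda>x. g1 x + g1 (1 - x)) integrable_on {0..1}" using integrable_add[OF i1 conjunct1[OF r1]] .
      fix x :: real assume x: "x \<in> {0..1}"
      have "g1 x \<le> (1 - x) * f a + x * f c" using p1[OF x] .
      moreover have "g1 (1 - x) \<le> (1 - (1 - x)) * f a + (1 - x) * f c" using p1[of "1 - x"] x by auto
      ultimately show "g1 x + g1 (1 - x) \<le> f a + f c" by (simp add: algebra_simps)
    qed (rule integrable_const_ivl)
    also have "\<dots> = f a + f c" by simp
    finally have "integral {0..1} (\<lambda>x. g1 x) + integral {0..1} (\<lambda>x. g1 (1 - x)) \<le> f a + f c"
      using integral_add[OF i1 conjunct1[OF r1]] by simp
    then show ?thesis using r1 by simp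
  qed
  have U2: "2 * integral {0..1} g2 \<le> f c + f b"
  proof -
    have "integral {0..1} (\<lambda>x. g2 x + g2 (1 - x)) \<le> integral {0..1::real} (\<lambda>x. f c + f b)"
    proof (rule Henstock_Kurzweil_Integration.integral_le)
      show "(\<lambda>x. g2 x + g2 (1 - x)) integrable_on {0..1}" using integrable_add[OF i2 conjunct1[OF r2]] .
      fix x :: real assume x: "x \<in> {0..1}"
      have "g2 x \<le> (1 - x) * f c + x * f b" using p2[OF x] .
      moreover have "g2 (1 - x) \<le> (1 - (1 - x)) * f c + (1 - x) * f b" using p2[of "1 - x"] x by auto
      ultimately show "g2 x + g2 (1 - x) \<le> f c + f b" by (simp add: algebra_simps)
    qed (rule integrable_const_ivl)
    also have "\<dots> = f c + f b" by simp
    finally have "integral {0..1} (\<lambda>x. g2 x) + integral {0..1} (\<lambda>x. g2 (1 - x)) \<le> f c + f b"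
      using integral_add[OF i2 conjunct1[OF r2]] by simp
    then show ?thesis using r2 by simp
  qed
  have fc: "f c \<le> t * f b + (1 - t) * f a"
    using cvx[OF t0 t1 abi(1) abi(2)] unfolding c_def by (simp add: algebra_simps)
  have U: "(1 - t) * integral {0..1} g1 + t * integral {0..1} g2 \<le> t * f b + (1 - t) * f a"
  proof -
    have "2 * ((1 - t) * integral {0..1} g1 + t * integral {0..1} g2)
        = (1 - t) * (2 * integral {0..1} g1) + t * (2 * integral {0..1} g2)" by (simp add: algebra_simps)
    also have "\<dots> \<le> (1 - t) * (f a + f c) + t * (f c + f b)"
      using U1 U2 t0 t1 by (intro add_mono mult_left_mono) auto
    finally show ?thesis using fc by (simp add: algebra_simps)
  qed
  show ?thesis using L U unfolding g1_def g2_def c_def by simp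
qed

end
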